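(* Let $\Omega\subseteq\mathcal{A}_n$ be a closed set which is uniformly transversally star-shaped with respect to $S\in\mathcal{A}_n$. Then for every $R\in\Omega$, the tensor $R+\alpha(S-R)$ lies in the interior of $\Omega$ for all $\alpha\in(0,1)$.
   Context: $\mathcal{A}_n$ is the (finite-dimensional Euclidean) space of algebraic curvature tensors on $\mathbb{R}^n$, i.e. symmetric bilinear forms on $\Lambda^2\mathbb{R}^n$ satisfying the first Bianchi identity, with scalar product $\langle R,S\rangle=\mathrm{tr}(R\circ S)$. A closed $\Omega\subseteq\mathcal{A}_n$ is uniformly transversally star-shaped with respect to $S$ if for every compact $K\subseteq\mathcal{A}_n$ there is $r>0$ such that for every $R\in K\cap\partial\Omega$ there is $\varepsilon_0>0$ with $R+\varepsilon B_r(S-R)\subseteq\Omega$ for all $\varepsilon\in[0,\varepsilon_0)$, where $B_r(v)$ is the open ball of radius $r$ around $v$. *)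

theory Defs
  imports "HOL-Analysis.Analysis"
begin

text \<open>Algebraic curvature tensors on R^n, represented by their components
  R(e_i,e_j,e_k,e_l) as 4-index arrays over a finite index type 'n (n = CARD('n)).
  A symmetric bilinear form on Lambda^2 R^n corresponds exactly to a 4-tensor that is
  antisymmetric in (i,j), antisymmetric in (k,l) and symmetric under the pair swap.\<close>

type_synonym 'n curv = "real ^ 'n ^ 'n ^ 'n ^ 'n"

definition alg_curv_tensors :: "'n::finite curv set" where
  "alg_curv_tensors = {R.
     (\<forall>i j k l. R$i$j$k$l = - (R$j$i$k$l)) \<and>
     (\<forall>i j k l. R$i$j$k$l = - (R$i$j$l$k)) \<and>
     (\<forall>i j k l. R$i$j$k$l = R$k$l$i$j) \<and>
     (\<forall>i j k l. R$i$j$k$l + R$j$k$i$l + R$k$i$j$l = 0)}"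

text \<open>The scalar product tr(R o S) of the forms on Lambda^2 R^n: with the orthonormal basis
  e_i /\ e_j (i<j) this is sum over i<j, k<l of R_ijkl S_ijkl, i.e. one quarter of the full sum.\<close>

definition curv_inner :: "'n::finite curv \<Rightarrow> 'n curv \<Rightarrow> real" where
  "curv_inner R S = (\<Sum>i\<in>UNIV. \<Sum>j\<in>UNIV. \<Sum>k\<in>UNIV. \<Sum>l\<in>UNIV. R$i$j$k$l * S$i$j$k$l) / 4"

definition curv_norm :: "'n::finite curv \<Rightarrow> real" where
  "curv_norm R = sqrt (curv_inner R R)"

definition curv_ball :: "'n::finite curv \<Rightarrow> real \<Rightarrow> 'n curv set" where
  "curv_ball v r = {w \<in> alg_curv_tensors. curv_norm (w - v) < r}"

definition curv_interior :: "'n::finite curv set \<Rightarrow> 'n curv set" where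
  "curv_interior \<Omega> = {x \<in> alg_curv_tensors. \<exists>r>0. curv_ball x r \<subseteq> \<Omega>}"

definition curv_closed :: "'n::finite curv set \<Rightarrow> bool" where
  "curv_closed \<Omega> \<longleftrightarrow> \<Omega> \<subseteq> alg_curv_tensors \<and>
     (\<forall>x \<in> alg_curv_tensors. (\<forall>r>0. curv_ball x r \<inter> \<Omega> \<noteq> {}) \<longrightarrow> x \<in> \<Omega>)"

definition curv_closure :: "'n::finite curv set \<Rightarrow> 'n curv set" where
  "curv_closure \<Omega> = {x \<in> alg_curv_tensors. \<forall>r>0. curv_ball x r \<inter> \<Omega> \<noteq> {}}"

definition curv_boundary :: "'n::finite curv set \<Rightarrow> 'n curv set" where
  "curv_boundary \<Omega> = curv_closure \<Omega> - curv_interior \<Omega>"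

definition unif_trans_star_shaped :: "'n::finite curv set \<Rightarrow> 'n curv \<Rightarrow> bool" where
  "unif_trans_star_shaped \<Omega> S \<longleftrightarrow>
     (\<forall>K. K \<subseteq> alg_curv_tensors \<and> compact K \<longrightarrow>
        (\<exists>r>0. \<forall>R \<in> K \<inter> curv_boundary \<Omega>. \<exists>\<epsilon>0>0. \<forall>\<epsilon>\<in>{0..<\<epsilon>0}.
            (\<lambda>v. R + \<epsilon> *\<^sub>R v) ` curv_ball (S - R) r \<subseteq> \<Omega>))"

end

theory Submission imports Defs begin
lemma cn_eq: "curv_norm (x::'n::finite curv) = norm x / 2"
proof -
  have "curv_inner x x = inner x x / 4"
    unfolding curv_inner_def inner_vec_def inner_real_def by simp
  moreover have "sqrt 4 = (2::real)" by (rule real_sqrt_unique) auto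
  ultimately show ?thesis unfolding curv_norm_def
    by (simp only: real_sqrt_divide norm_eq_sqrt_inner)
qed
lemma sub: "subspace (alg_curv_tensors :: 'n::finite curv set)"
  unfolding subspace_def
proof (intro conjI ballI allI)
  show "0 \<in> (alg_curv_tensors :: 'n::finite curv set)" unfolding alg_curv_tensors_def by simp
next
  fix x y :: "'n curv" assume x: "x \<in> alg_curv_tensors" and y: "y \<in> alg_curv_tensors"
  note X = x[unfolded alg_curv_tensors_def mem_Collect_eq]
  note Y = y[unfolded alg_curv_tensors_def mem_Collect_eq]
  note X4 = X[THEN conjunct2, THEN conjunct2, THEN conjunct2, rule_format]
  note Y4 = Y[THEN conjunct2, THEN conjunct2, THEN conjunct2, rule_format]
  show "x + y \<in> alg_curv_tensors"
    unfolding alg_curv_tensors_def mem_Collect_eq vector_add_component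
  proof (intro conjI allI)
    fix i j k l
    show "x $ i $ j $ k $ l + y $ i $ j $ k $ l = - (x $ j $ i $ k $ l + y $ j $ i $ k $ l)"
      using X Y by (metis minus_add_distrib)
    show "x $ i $ j $ k $ l + y $ i $ j $ k $ l = - (x $ i $ j $ l $ k + y $ i $ j $ l $ k)"
      using X Y by (metis minus_add_distrib)
    show "x $ i $ j $ k $ l + y $ i $ j $ k $ l = (x $ k $ l $ i $ j + y $ k $ l $ i $ j)"
      using X Y by metis
    have "x $ i $ j $ k $ l + x $ j $ k $ i $ l + x $ k $ i $ j $ l = 0"
      "y $ i $ j $ k $ l + y $ j $ k $ i $ l + y $ k $ i $ j $ l = 0" by (rule X4, rule Y4)
    then show "x $ i $ j $ k $ l + y $ i $ j $ k $ l + (x $ j $ k $ i $ l + y $ j $ k $ i $ l) + (x $ k $ i $ j $ l + y $ k $ i $ j $ l) = 0"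
      by linarith
  qed
next
  fix c :: real and x :: "'n curv" assume x: "x \<in> alg_curv_tensors"
  note X = x[unfolded alg_curv_tensors_def mem_Collect_eq]
  note X4 = X[THEN conjunct2, THEN conjunct2, THEN conjunct2, rule_format]
  show "c *\<^sub>R x \<in> alg_curv_tensors"
    unfolding alg_curv_tensors_def mem_Collect_eq vector_scaleR_component real_scaleR_def
  proof (intro conjI allI)
    fix i j k l
    show "c * x $ i $ j $ k $ l = - (c * x $ j $ i $ k $ l)"
      using X by (metis mult_minus_right)
    show "c * x $ i $ j $ k $ l = - (c * x $ i $ j $ l $ k)"
      using X by (metis mult_minus_right)
    show "c * x $ i $ j $ k $ l = c * x $ k $ l $ i $ j"
      using X by metis
    have "x $ i $ j $ k $ l + x $ j $ k $ i $ l + x $ k $ i $ j $ l = 0" by (rule X4)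
    then have "c * (x $ i $ j $ k $ l + x $ j $ k $ i $ l + x $ k $ i $ j $ l) = 0" by simp
    then show "c * x $ i $ j $ k $ l + c * x $ j $ k $ i $ l + c * x $ k $ i $ j $ l = 0"
      by (simp add: distrib_left)
  qed
qed

lemma A_add: "x \<in> alg_curv_tensors \<Longrightarrow> y \<in> alg_curv_tensors \<Longrightarrow> x + y \<in> alg_curv_tensors"
  using sub subspace_add by blast
lemma A_diff: "x \<in> alg_curv_tensors \<Longrightarrow> y \<in> alg_curv_tensors \<Longrightarrow> x - y \<in> alg_curv_tensors"
  using sub subspace_diff by blast
lemma A_scale: "x \<in> alg_curv_tensors \<Longrightarrow> c *\<^sub>R x \<in> alg_curv_tensors"
  using sub subspace_scale by blast

lemma cn_scale: "curv_norm (c *\<^sub>R x) = \<bar>c\<bar> * curv_norm x"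
  by (simp add: cn_eq)
lemma cn_nonneg: "curv_norm x \<ge> 0"
  by (simp add: cn_eq)

theorem lemma4p6:
  fixes \<Omega> :: "'n::finite curv set" and S :: "'n curv"
  assumes "S \<in> alg_curv_tensors"
    and "curv_closed \<Omega>"
    and "unif_trans_star_shaped \<Omega> S"
    and "R \<in> \<Omega>"
    and "0 < \<alpha>" and "\<alpha> < 1"
  shows "R + \<alpha> *\<^sub>R (S - R) \<in> curv_interior \<Omega>"
proof -
  let ?A = "alg_curv_tensors :: 'n curv set"
  note SA = assms(1)
  have OA: "\<Omega> \<subseteq> ?A" using assms(2) unfolding curv_closed_def by blast
  have RA: "R \<in> ?A" using OA assms(4) by blast
  have clo: "\<And>x. x \<in> ?A \<Longrightarrow> (\<And>\<rho>. \<rho> > 0 \<Longrightarrow> curv_ball x \<rho> \<inter> \<Omega> \<noteq> {}) \<Longrightarrow> x \<in> \<Omega>"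
    using assms(2) unfolding curv_closed_def by blast
  define M where "M = norm (S - R) + 2"
  define K where "K = ?A \<inter> cball R M"
  have "compact K" unfolding K_def
    by (intro closed_Int_compact closed_subspace sub compact_cball)
  moreover have "K \<subseteq> ?A" unfolding K_def by blast
  ultimately obtain r where r0: "r > 0" and rprop: "\<forall>Q \<in> K \<inter> curv_boundary \<Omega>. \<exists>\<epsilon>0>0. \<forall>\<epsilon>\<in>{0..<\<epsilon>0}.
            (\<lambda>v. Q + \<epsilon> *\<^sub>R v) ` curv_ball (S - Q) r \<subseteq> \<Omega>"
    using assms(3) unfolding unif_trans_star_shaped_def by blast
  define r1 where "r1 = min r 1"
  have r10: "r1 > 0" using r0 unfolding r1_def by simp
  have key: "R + \<alpha> *\<^sub>R (S + u - R) \<in> \<Omega>" if uA: "u \<in> ?A" and un: "curv_norm u < r1" for u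
  proof (rule ccontr)
    assume nin: "R + \<alpha> *\<^sub>R (S + u - R) \<notin> \<Omega>"
    define d where "d = S + u - R"
    have dA: "d \<in> ?A" unfolding d_def using SA uA RA by (intro A_diff A_add)
    define P where "P t = R + t *\<^sub>R d" for t
    have PA: "P t \<in> ?A" for t unfolding P_def using RA dA by (intro A_add A_scale)
    have cnP: "curv_norm (P t - P t') = \<bar>t - t'\<bar> * curv_norm d" for t t'
    proof -
      have "P t - P t' = (t - t') *\<^sub>R d" unfolding P_def by (simp add: algebra_simps)
      then show ?thesis by (simp add: cn_scale)
    qed
    define B where "B = {t\<in>{0..\<alpha>}. P t \<notin> \<Omega>}"
    have aB: "\<alpha> \<in> B" unfolding B_def P_def d_def using nin assms(5) by simp
    have bdd: "bdd_below B" unfolding B_def by (rule bdd_belowI[of _ 0]) simp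
    define s where "s = Inf B"
    have s0: "0 \<le> s" unfolding s_def using aB by (intro cInf_greatest) (auto simp: B_def)
    have sa: "s \<le> \<alpha>" unfolding s_def using aB bdd by (rule cInf_lower)
    have sle: "t \<in> B \<Longrightarrow> s \<le> t" for t unfolding s_def using bdd by (simp add: cInf_lower)
    have below: "P t \<in> \<Omega>" if "0 \<le> t" "t < s" for t
    proof (rule ccontr)
      assume "P t \<notin> \<Omega>"
      then have "t \<in> B" unfolding B_def using that sa by simp
      then show False using sle that by force
    qed
    have near: "\<exists>t\<in>B. t < s + \<delta>" if "\<delta> > 0" for \<delta>
    proof -
      have "Inf B < s + \<delta>" unfolding s_def using that by simp
      then show ?thesis using aB cInf_less_iff[of B "s + \<delta>"] bdd by blast
    qed
    have cnd: "curv_norm d \<ge> 0" by (rule cn_nonneg)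
    have PsO: "P s \<in> \<Omega>"
    proof (cases "s = 0")
      case True
      then show ?thesis unfolding P_def using assms(4) by simp
    next
      case False
      then have spos: "s > 0" using s0 by simp
      show ?thesis
      proof (rule clo[OF PA])
        fix \<rho> :: real assume \<rho>0: "\<rho> > 0"
        define \<eta> where "\<eta> = min (s/2) (\<rho> / (2 * (curv_norm d + 1)))"
        have \<eta>0: "\<eta> > 0" unfolding \<eta>_def using spos \<rho>0 cnd by simp
        have \<eta>s: "\<eta> < s" unfolding \<eta>_def using spos by simp
        have "\<eta> * curv_norm d \<le> \<rho> / (2 * (curv_norm d + 1)) * curv_norm d"
          by (rule mult_right_mono) (auto simp: \<eta>_def cnd)
        also have "\<dots> < \<rho>"
        proof -
          have "\<rho> * curv_norm d < \<rho> * (2 * (curv_norm d + 1))"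
            using \<rho>0 cnd by (intro mult_strict_left_mono) auto
          then show ?thesis using cnd by (simp add: field_simps)
        qed
        finally have lt: "\<eta> * curv_norm d < \<rho>" .
        have "P (s - \<eta>) \<in> \<Omega>" using below \<eta>0 \<eta>s by simp
        moreover have "P (s - \<eta>) \<in> curv_ball (P s) \<rho>"
          unfolding curv_ball_def using PA cnP[of "s - \<eta>" s] lt \<eta>0 by simp
        ultimately show "curv_ball (P s) \<rho> \<inter> \<Omega> \<noteq> {}" by blast
      qed
    qed
    show False
    proof (cases "P s \<in> curv_interior \<Omega>")
      case True
      then obtain \<rho> where \<rho>0: "\<rho> > 0" and sub\<rho>: "curv_ball (P s) \<rho> \<subseteq> \<Omega>"
        unfolding curv_interior_def by blast
      define \<delta> where "\<delta> = \<rho> / (curv_norm d + 1)"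
      have \<delta>0: "\<delta> > 0" unfolding \<delta>_def using \<rho>0 cnd by simp
      obtain t where tB: "t \<in> B" and tl: "t < s + \<delta>" using near[OF \<delta>0] by blast
      have st: "s \<le> t" using sle[OF tB] .
      have "(t - s) * curv_norm d \<le> (t - s) * (curv_norm d + 1)"
        using st by (intro mult_left_mono) auto
      also have "\<dots> < \<delta> * (curv_norm d + 1)"
        using tl cnd by (intro mult_strict_right_mono) auto
      also have "\<dots> = \<rho>" unfolding \<delta>_def using cnd by simp
      finally have "(t - s) * curv_norm d < \<rho>" .
      then have "P t \<in> curv_ball (P s) \<rho>"
        unfolding curv_ball_def using PA cnP[of t s] st by simp
      then have "P t \<in> \<Omega>" using sub\<rho> by blast
      then show False using tB unfolding B_def by simp
    next
      case False
      have "P s \<in> curv_closure \<Omega>"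
        unfolding curv_closure_def
      proof (intro CollectI conjI allI impI PA)
        fix \<rho> :: real assume "\<rho> > 0"
        then have "P s \<in> curv_ball (P s) \<rho>" unfolding curv_ball_def using PA by (simp add: cn_eq)
        then show "curv_ball (P s) \<rho> \<inter> \<Omega> \<noteq> {}" using PsO by blast
      qed
      then have bd: "P s \<in> curv_boundary \<Omega>" unfolding curv_boundary_def using False by blast
      have "norm u < 2" using un unfolding r1_def cn_eq by simp
      have "dist R (P s) = s * norm d" unfolding P_def dist_norm using s0 by simp
      also have "\<dots> \<le> norm d" using s0 sa assms(6) by (intro mult_left_le_one_le) auto
      also have "\<dots> \<le> norm (S - R) + norm u" unfolding d_def
        by (metis add.commute add_diff_eq norm_triangle_ineq diff_add_eq)
      also have "\<dots> \<le> M" unfolding M_def using \<open>norm u < 2\<close> by simp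
      finally have "P s \<in> K" unfolding K_def using PA by simp
      with bd rprop obtain \<epsilon>0 where e0: "\<epsilon>0 > 0" and eprop:
        "\<forall>\<epsilon>\<in>{0..<\<epsilon>0}. (\<lambda>v. P s + \<epsilon> *\<^sub>R v) ` curv_ball (S - P s) r \<subseteq> \<Omega>" by blast
      have s1: "s < 1" using sa assms(6) by simp
      define \<delta> where "\<delta> = \<epsilon>0 * (1 - s)"
      have \<delta>0: "\<delta> > 0" unfolding \<delta>_def using e0 s1 by simp
      obtain t where tB: "t \<in> B" and tl: "t < s + \<delta>" using near[OF \<delta>0] by blast
      have st: "s \<le> t" using sle[OF tB] .
      define \<epsilon> where "\<epsilon> = (t - s) / (1 - s)"
      have "\<epsilon> \<in> {0..<\<epsilon>0}" unfolding \<epsilon>_def using st s1 tl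
        by (simp add: \<delta>_def divide_simps)
      then have img: "(\<lambda>v. P s + \<epsilon> *\<^sub>R v) ` curv_ball (S - P s) r \<subseteq> \<Omega>" using eprop by blast
      define v where "v = (1 - s) *\<^sub>R d"
      have vA: "v \<in> ?A" unfolding v_def using dA by (rule A_scale)
      have "v - (S - P s) = u" unfolding v_def P_def d_def by (simp add: algebra_simps)
      then have "v \<in> curv_ball (S - P s) r" unfolding curv_ball_def
        using vA un unfolding r1_def by simp
      then have "P s + \<epsilon> *\<^sub>R v \<in> \<Omega>" using img by blast
      moreover have "P s + \<epsilon> *\<^sub>R v = P t"
      proof -
        have "\<epsilon> * (1 - s) = t - s" unfolding \<epsilon>_def using s1 by simp
        then have "s + \<epsilon> * (1 - s) = t" by simp
        then show ?thesis unfolding P_def v_def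
          by (metis (no_types, lifting) add.assoc scaleR_left_distrib scaleR_scaleR)
      qed
      ultimately show False using tB unfolding B_def by simp
    qed
  qed
  show ?thesis
    unfolding curv_interior_def
  proof (intro CollectI conjI exI[of _ "\<alpha> * r1"])
    show "R + \<alpha> *\<^sub>R (S - R) \<in> ?A" using RA SA by (intro A_add A_scale A_diff)
    show "\<alpha> * r1 > 0" using assms(5) r10 by simp
    show "curv_ball (R + \<alpha> *\<^sub>R (S - R)) (\<alpha> * r1) \<subseteq> \<Omega>"
    proof
      fix w assume "w \<in> curv_ball (R + \<alpha> *\<^sub>R (S - R)) (\<alpha> * r1)"
      then have wA: "w \<in> ?A" and wn: "curv_norm (w - (R + \<alpha> *\<^sub>R (S - R))) < \<alpha> * r1"
        unfolding curv_ball_def by auto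
      define u where "u = (1 / \<alpha>) *\<^sub>R (w - (R + \<alpha> *\<^sub>R (S - R)))"
      have uA: "u \<in> ?A" unfolding u_def using wA RA SA by (intro A_scale A_diff A_add)
      have "curv_norm u = curv_norm (w - (R + \<alpha> *\<^sub>R (S - R))) / \<alpha>"
        unfolding u_def cn_scale using assms(5) by simp
      also have "\<dots> < r1" using wn assms(5) by (simp add: divide_simps mult.commute)
      finally have "R + \<alpha> *\<^sub>R (S + u - R) \<in> \<Omega>" using key uA by blast
      moreover have "R + \<alpha> *\<^sub>R (S + u - R) = w"
      proof -
        have "\<alpha> *\<^sub>R u = w - (R + \<alpha> *\<^sub>R (S - R))" unfolding u_def using assms(5) by simp
        then show ?thesis by (simp add: algebra_simps)
      qed
      ultimately show "w \<in> \<Omega>" by simp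
    qed
  qed
qed

end
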